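(* For all coinitial CCSK transitions $t,u$: $t,u$ are directly key independent if and only if $t\mathrel\iota u$.
   Context: Names $\mathsf N$ with bijection $\overline\cdot$ onto disjoint co-names; $\mathsf L=\mathsf N\cup\overline{\mathsf N}\cup\{\tau\}$ ($\alpha,\beta$ over $\mathsf L$, $\lambda$ over $\mathsf L\setminus\{\tau\}$); keys $\mathsf K$ denumerable. CCSK processes $X::=\mathbf 0\mid\alpha.X\mid X\backslash\lambda\mid X+Y\mid X|Y\mid\alpha[k].X$; $\mathrm{keys}(X)$ keys in $X$. Directions $D\in\{\mathrm L,\mathrm R\}$, $\bar{\mathrm L}=\mathrm R$, $\bar{\mathrm R}=\mathrm L$. Proof keyed labels $\theta::=\upsilon\alpha[k]\mid\upsilon\langle\upsilon_1\lambda[k],\upsilon_2\overline\lambda[k]\rangle$ ($\upsilon,\upsilon_i\in\{|_{\mathrm L},|_{\mathrm R},+_{\mathrm L},+_{\mathrm R}\}^*$), $\ell(\upsilon\alpha[k])=\alpha$, $\ell(\upsilon\langle\cdots\rangle)=\tau$, $\mathrm{key}(\theta)=k$. Forward CCSK$^{\mathrm P}$ transitions: least relation closed under (act) $\alpha.X\xrightarrow{\alpha[k]}\alpha[k].X$ if $\mathrm{keys}(X)=\emptyset$; (pre) $X\xrightarrow\theta X',\mathrm{key}(\theta)\ne k\Rightarrow\alpha[k].X\xrightarrow\theta\alpha[k].X'$; (res) $X\xrightarrow\theta X',\ell(\theta)\notin\{\lambda,\overline\lambda\}\Rightarrow X\backslash\lambda\xrightarrow\theta X'\backslash\lambda$;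 (par) $X\xrightarrow\theta X',\mathrm{key}(\theta)\notin\mathrm{keys}(Y)\Rightarrow X|Y\xrightarrow{|_{\mathrm L}\theta}X'|Y$, $Y|X\xrightarrow{|_{\mathrm R}\theta}Y|X'$; (syn) $X\xrightarrow{\upsilon_1\lambda[k]}X',Y\xrightarrow{\upsilon_2\overline\lambda[k]}Y'\Rightarrow X|Y\xrightarrow{\langle\upsilon_1\lambda[k],\upsilon_2\overline\lambda[k]\rangle}X'|Y'$; (sum) $X\xrightarrow\theta X',\mathrm{keys}(Y)=\emptyset\Rightarrow X+Y\xrightarrow{+_{\mathrm L}\theta}X'+Y$, $Y+X\xrightarrow{+_{\mathrm R}\theta}Y+X'$. Backward transitions are converses. Only processes reachable by a path from a key-free process are considered. Transitions are connected if there is a path from the source of one to the target of the other. CCSK: same processes; for each CCSK$^{\mathrm P}$ transition with label $\theta$ a CCSK transition (same direction, same processes) with label $\ell(\theta)[\mathrm{key}(\theta)]$ (a bijection; $\hat t$ denotes the CCSK$^{\mathrm P}$ transition corresponding to $t$). Independence $\iota$ on proof labels: least relation closed under (C1) $+_D\theta\mathrel\iota+_D\theta'$ if $\theta\mathrel\iota\theta'$; (P1) $|_D\theta\mathrel\iota|_D\theta'$ if $\theta\mathrel\iota\theta'$; (P2$_k$) $|_D\theta\mathrel\iota|_{\bar D}\theta'$ if $\mathrm{key}(\theta)\ne\mathrm{key}(\theta')$; (S1) $|_D\theta\mathrel\iota\langle\theta_{\mathrm L},\theta_{\mathrm R}\rangle$ if $\theta\mathrel\iota\theta_D$; (S2)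 $\langle\theta_{\mathrm L},\theta_{\mathrm R}\rangle\mathrel\iota|_D\theta$ if $\theta_D\mathrel\iota\theta$; (S3) $\langle\theta_1,\theta_2\rangle\mathrel\iota\langle\theta_1',\theta_2'\rangle$ if $\theta_1\mathrel\iota\theta_1'$ and $\theta_2\mathrel\iota\theta_2'$. For CCSK transitions $t\mathrel\iota u$ iff $t,u$ are connected and the labels of $\hat t,\hat u$ satisfy $\iota$. CCSK transitions $t:P\to Q$ with label $\alpha[m]$ and $u:P\to R$ with label $\beta[n]$ (each forward or backward) are directly key independent if $m\ne n$ and there are transitions $u':Q\to S$ with label $\beta[n]$ and the direction of $u$, and $t':R\to S$ with label $\alpha[m]$ and the direction of $t$. *)

theory Defs
  imports Main
begin

text \<open>Names are an arbitrary type 'n; visible labels are names or co-names.\<close>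
datatype 'n vis = VN 'n | VC 'n

fun cobar :: "'n vis \<Rightarrow> 'n vis" where
  "cobar (VN a) = VC a"
| "cobar (VC a) = VN a"

datatype 'n act = Vis "'n vis" | Tau

type_synonym key = nat

datatype 'n proc =
    P0
  | Pre "'n act" "'n proc"              (* alpha.X *)
  | Rs "'n proc" "'n vis"               (* X \ lambda *)
  | Plus "'n proc" "'n proc"
  | Pa "'n proc" "'n proc"              (* X | Y *)
  | KPre "'n act" key "'n proc"         (* alpha[k].X *)

fun keys :: "'n proc \<Rightarrow> key set" where
  "keys P0 = {}"
| "keys (Pre a X) = keys X"
| "keys (Rs X l) = keys X"
| "keys (Plus X Y) = keys X \<union> keys Y"
| "keys (Pa X Y) = keys X \<union> keys Y"
| "keys (KPre a k X) = insert k (keys X)"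

datatype dir = DL | DR

fun flip :: "dir \<Rightarrow> dir" where
  "flip DL = DR" | "flip DR = DL"

text \<open>TPar D is the symbol |_D, TSum D is +_D.\<close>
datatype tag = TPar dir | TSum dir

text \<open>PA u a k  is  u a[k];
      PS u u1 l u2 k  is  u <u1 l[k], u2 (cobar l)[k]>.\<close>
datatype 'n plab =
    PA "tag list" "'n act" key
  | PS "tag list" "tag list" "'n vis" "tag list" key

fun pre :: "tag \<Rightarrow> 'n plab \<Rightarrow> 'n plab" where
  "pre g (PA u a k) = PA (g # u) a k"
| "pre g (PS u u1 l u2 k) = PS (g # u) u1 l u2 k"

fun lab :: "'n plab \<Rightarrow> 'n act" where
  "lab (PA u a k) = a"
| "lab (PS u u1 l u2 k) = Tau"

fun pkey :: "'n plab \<Rightarrow> key" where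
  "pkey (PA u a k) = k"
| "pkey (PS u u1 l u2 k) = k"

text \<open>Components theta_L and theta_R of a synchronisation <u1 l[k], u2 (cobar l)[k]>.\<close>
fun comp :: "dir \<Rightarrow> tag list \<Rightarrow> 'n vis \<Rightarrow> tag list \<Rightarrow> key \<Rightarrow> 'n plab" where
  "comp DL u1 l u2 k = PA u1 (Vis l) k"
| "comp DR u1 l u2 k = PA u2 (Vis (cobar l)) k"

inductive ftrans :: "'n proc \<Rightarrow> 'n plab \<Rightarrow> 'n proc \<Rightarrow> bool" where
  act: "keys X = {} \<Longrightarrow> ftrans (Pre a X) (PA [] a k) (KPre a k X)"
| pref: "ftrans X \<theta> X' \<Longrightarrow> pkey \<theta> \<noteq> k \<Longrightarrow> ftrans (KPre a k X) \<theta> (KPre a k X')"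
| res: "ftrans X \<theta> X' \<Longrightarrow> lab \<theta> \<notin> {Vis l, Vis (cobar l)} \<Longrightarrow> ftrans (Rs X l) \<theta> (Rs X' l)"
| parL: "ftrans X \<theta> X' \<Longrightarrow> pkey \<theta> \<notin> keys Y \<Longrightarrow> ftrans (Pa X Y) (pre (TPar DL) \<theta>) (Pa X' Y)"
| parR: "ftrans X \<theta> X' \<Longrightarrow> pkey \<theta> \<notin> keys Y \<Longrightarrow> ftrans (Pa Y X) (pre (TPar DR) \<theta>) (Pa Y X')"
| syn: "ftrans X (PA u1 (Vis l) k) X' \<Longrightarrow> ftrans Y (PA u2 (Vis (cobar l)) k) Y'
        \<Longrightarrow> ftrans (Pa X Y) (PS [] u1 l u2 k) (Pa X' Y')"
| sumL: "ftrans X \<theta> X' \<Longrightarrow> keys Y = {} \<Longrightarrow> ftrans (Plus X Y) (pre (TSum DL) \<theta>) (Plus X' Y)"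
| sumR: "ftrans X \<theta> X' \<Longrightarrow> keys Y = {} \<Longrightarrow> ftrans (Plus Y X) (pre (TSum DR) \<theta>) (Plus Y X')"

definition step :: "'n proc \<Rightarrow> 'n proc \<Rightarrow> bool" where
  "step P Q \<longleftrightarrow> (\<exists>\<theta>. ftrans P \<theta> Q \<or> ftrans Q \<theta> P)"

definition reachable :: "'n proc \<Rightarrow> bool" where
  "reachable P \<longleftrightarrow> (\<exists>P0'. keys P0' = {} \<and> step\<^sup>*\<^sup>* P0' P)"

inductive iota :: "'n plab \<Rightarrow> 'n plab \<Rightarrow> bool" where
  C1: "iota \<theta> \<theta>' \<Longrightarrow> iota (pre (TSum D) \<theta>) (pre (TSum D) \<theta>')"
| P1: "iota \<theta> \<theta>' \<Longrightarrow> iota (pre (TPar D) \<theta>) (pre (TPar D) \<theta>')"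
| P2: "pkey \<theta> \<noteq> pkey \<theta>' \<Longrightarrow> iota (pre (TPar D) \<theta>) (pre (TPar (flip D)) \<theta>')"
| S1: "iota \<theta> (comp D u1 l u2 k) \<Longrightarrow> iota (pre (TPar D) \<theta>) (PS [] u1 l u2 k)"
| S2: "iota (comp D u1 l u2 k) \<theta> \<Longrightarrow> iota (PS [] u1 l u2 k) (pre (TPar D) \<theta>)"
| S3: "iota (PA u1 (Vis l) k) (PA u1' (Vis l') k') \<Longrightarrow>
       iota (PA u2 (Vis (cobar l)) k) (PA u2' (Vis (cobar l')) k') \<Longrightarrow>
       iota (PS [] u1 l u2 k) (PS [] u1' l' u2' k')"

datatype direction = Fw | Bw

datatype 'n ctrans = CT (src: "'n proc") (dirn: direction) (clab: "'n act") (ckey: key) (tgt: "'n proc")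

text \<open>t-hat: a CCSK^P transition (with label theta) corresponding to the CCSK transition t.\<close>
definition hat :: "'n ctrans \<Rightarrow> 'n plab \<Rightarrow> bool" where
  "hat t \<theta> \<longleftrightarrow> lab \<theta> = clab t \<and> pkey \<theta> = ckey t \<and>
     (if dirn t = Fw then ftrans (src t) \<theta> (tgt t) else ftrans (tgt t) \<theta> (src t))"

definition is_ctrans :: "'n ctrans \<Rightarrow> bool" where
  "is_ctrans t \<longleftrightarrow> reachable (src t) \<and> (\<exists>\<theta>. hat t \<theta>)"

definition connected :: "'n ctrans \<Rightarrow> 'n ctrans \<Rightarrow> bool" where
  "connected t u \<longleftrightarrow> step\<^sup>*\<^sup>* (src t) (tgt u) \<or> step\<^sup>*\<^sup>* (src u) (tgt t)"

definition ctrans_indep :: "'n ctrans \<Rightarrow> 'n ctrans \<Rightarrow> bool" where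
  "ctrans_indep t u \<longleftrightarrow> connected t u \<and> (\<exists>\<theta> \<theta>'. hat t \<theta> \<and> hat u \<theta>' \<and> iota \<theta> \<theta>')"

definition coinitial :: "'n ctrans \<Rightarrow> 'n ctrans \<Rightarrow> bool" where
  "coinitial t u \<longleftrightarrow> src t = src u"

definition direct_key_indep :: "'n ctrans \<Rightarrow> 'n ctrans \<Rightarrow> bool" where
  "direct_key_indep t u \<longleftrightarrow> ckey t \<noteq> ckey u \<and>
     (\<exists>S. is_ctrans (CT (tgt t) (dirn u) (clab u) (ckey u) S) \<and>
          is_ctrans (CT (tgt u) (dirn t) (clab t) (ckey t) S))"

end

theory Submission
  imports Defs
begin

lemma pre_pkey[simp]: "pkey (pre g \<theta>) = pkey \<theta>" by (cases \<theta>) auto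
lemma pre_lab[simp]: "lab (pre g \<theta>) = lab \<theta>" by (cases \<theta>) auto
lemma pre_inj[simp]: "pre g \<theta> = pre g' \<theta>' \<longleftrightarrow> g = g' \<and> \<theta> = \<theta>'"
  by (cases \<theta>; cases \<theta>') auto
lemma pre_neq[simp]: "pre g \<theta> \<noteq> PA [] a k" "PA [] a k \<noteq> pre g \<theta>"
  "pre g \<theta> \<noteq> PS [] u1 l u2 k" "PS [] u1 l u2 k \<noteq> pre g \<theta>"
  by (cases \<theta>; auto)+
lemma comp_key[simp]: "pkey (comp D u1 l u2 k) = k" by (cases D) auto

lemma iota_key: "iota \<theta> \<theta>' \<Longrightarrow> pkey \<theta> \<noteq> pkey \<theta>'"
  by (induction rule: iota.induct) auto

lemma not_iota_PA: "\<not> iota (PA [] a k) \<theta>" "\<not> iota \<theta> (PA [] a k)"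
  by (auto elim: iota.cases)

lemma iota_sum_inv: "iota (pre (TSum D1) \<theta>1) (pre (TSum D2) \<theta>2) \<Longrightarrow> D1 = D2 \<and> iota \<theta>1 \<theta>2"
  by (erule iota.cases) auto
lemma iota_par_inv: "iota (pre (TPar D1) \<theta>1) (pre (TPar D2) \<theta>2) \<Longrightarrow>
   (D1 = D2 \<and> iota \<theta>1 \<theta>2) \<or> (D2 = flip D1 \<and> pkey \<theta>1 \<noteq> pkey \<theta>2)"
  by (erule iota.cases) auto
lemma iota_S1_inv: "iota (pre (TPar D) \<theta>1) (PS [] u1 l u2 k) \<Longrightarrow> iota \<theta>1 (comp D u1 l u2 k)"
  by (erule iota.cases) auto
lemma iota_S2_inv: "iota (PS [] u1 l u2 k) (pre (TPar D) \<theta>1) \<Longrightarrow> iota (comp D u1 l u2 k) \<theta>1"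
  by (erule iota.cases) auto
lemma iota_S3_inv: "iota (PS [] u1 l u2 k) (PS [] u1' l' u2' k') \<Longrightarrow>
   iota (PA u1 (Vis l) k) (PA u1' (Vis l') k') \<and> iota (PA u2 (Vis (cobar l)) k) (PA u2' (Vis (cobar l')) k')"
  by (erule iota.cases) auto

lemma ftrans_keys: "ftrans A \<phi> B \<Longrightarrow> pkey \<phi> \<notin> keys A \<and> keys B = insert (pkey \<phi>) (keys A)"
  by (induction rule: ftrans.induct) auto

definition ts where "ts A \<phi> B \<longleftrightarrow> ftrans A \<phi> B \<or> ftrans B \<phi> A"
definition kst where "kst A k B \<longleftrightarrow> (\<exists>\<phi>. pkey \<phi> = k \<and> ts A \<phi> B)"
definition otr where "otr f k A B \<longleftrightarrow> (if f then kst A k B else A = B)"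
fun tr :: "direction \<Rightarrow> 'n proc \<Rightarrow> 'n plab \<Rightarrow> 'n proc \<Rightarrow> bool" where
  "tr Fw A \<phi> B = ftrans A \<phi> B" | "tr Bw A \<phi> B = ftrans B \<phi> A"

lemma ts_keys: "ts A \<phi> B \<Longrightarrow> ((x \<in> keys A) \<noteq> (x \<in> keys B)) = (x = pkey \<phi>)"
  unfolding ts_def by (auto dest!: ftrans_keys)
lemma kst_keys: "kst A k B \<Longrightarrow> ((x \<in> keys A) \<noteq> (x \<in> keys B)) = (x = k)"
  unfolding kst_def using ts_keys by blast
lemma otr_keys: "otr f k A B \<Longrightarrow> ((x \<in> keys A) \<noteq> (x \<in> keys B)) = (f \<and> x = k)"
  unfolding otr_def using kst_keys by (cases f) auto
lemma comp_lemma: "otr fa k1 X X1 \<Longrightarrow> otr fb k2 X1 S \<Longrightarrow> otr fc k2 X X2 \<Longrightarrow> otr fd k1 X2 S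
  \<Longrightarrow> k1 \<noteq> k2 \<Longrightarrow> fa = fd \<and> fb = fc"
proof -
  assume a: "otr fa k1 X X1" and b: "otr fb k2 X1 S" and c: "otr fc k2 X X2" and d: "otr fd k1 X2 S"
    and ne: "k1 \<noteq> k2"
  have 1: "fa = fd" using otr_keys[OF a, of k1] otr_keys[OF b, of k1] otr_keys[OF c, of k1] otr_keys[OF d, of k1] ne
    by auto
  have 2: "fb = fc" using otr_keys[OF a, of k2] otr_keys[OF b, of k2] otr_keys[OF c, of k2] otr_keys[OF d, of k2] ne
    by auto
  show ?thesis using 1 2 by simp
qed

lemma ts_neq: "ts A \<phi> B \<Longrightarrow> A \<noteq> B"
  using ts_keys by blast

lemma ts_P0: "\<not> ts P0 \<phi> B"
  unfolding ts_def by (auto elim: ftrans.cases)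
lemma ts_Pre: "ts (Pre a X) \<phi> B \<Longrightarrow> \<phi> = PA [] a (pkey \<phi>) \<and> B = KPre a (pkey \<phi>) X"
  unfolding ts_def by (auto elim: ftrans.cases)
lemma ts_KPre: "ts (KPre a k X) \<phi> B \<Longrightarrow> (\<exists>X'. B = KPre a k X' \<and> ts X \<phi> X' \<and> pkey \<phi> \<noteq> k) \<or>
   (\<phi> = PA [] a k \<and> B = Pre a X)"
  unfolding ts_def by (auto elim: ftrans.cases)
lemma ts_Rs: "ts (Rs X l) \<phi> B \<Longrightarrow> \<exists>X'. B = Rs X' l \<and> ts X \<phi> X'"
  unfolding ts_def by (auto elim: ftrans.cases)
lemma ts_Plus: "ts (Plus X Y) \<phi> B \<Longrightarrow>
   (\<exists>\<phi>1 X'. \<phi> = pre (TSum DL) \<phi>1 \<and> B = Plus X' Y \<and> ts X \<phi>1 X' \<and> keys Y = {}) \<or>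
   (\<exists>\<phi>1 Y'. \<phi> = pre (TSum DR) \<phi>1 \<and> B = Plus X Y' \<and> ts Y \<phi>1 Y' \<and> keys X = {})"
  unfolding ts_def by (auto elim: ftrans.cases)
lemma ts_Pa: "ts (Pa X Y) \<phi> B \<Longrightarrow>
   (\<exists>\<phi>1 X'. \<phi> = pre (TPar DL) \<phi>1 \<and> B = Pa X' Y \<and> ts X \<phi>1 X') \<or>
   (\<exists>\<phi>1 Y'. \<phi> = pre (TPar DR) \<phi>1 \<and> B = Pa X Y' \<and> ts Y \<phi>1 Y') \<or>
   (\<exists>u1 l u2 k X' Y'. \<phi> = PS [] u1 l u2 k \<and> B = Pa X' Y' \<and> ts X (PA u1 (Vis l) k) X' \<and>
       ts Y (PA u2 (Vis (cobar l)) k) Y')"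
  unfolding ts_def by (auto elim: ftrans.cases)
lemma kst_Pa: "kst (Pa X Y) k B \<Longrightarrow> \<exists>X' Y' fL fR. B = Pa X' Y' \<and> otr fL k X X' \<and> otr fR k Y Y'"
proof -
  assume "kst (Pa X Y) k B"
  then obtain \<phi> where k: "pkey \<phi> = k" and t: "ts (Pa X Y) \<phi> B" unfolding kst_def by blast
  from ts_Pa[OF t] show ?thesis
  proof (elim disjE exE conjE)
    fix \<phi>1 X' assume "\<phi> = pre (TPar DL) \<phi>1" "B = Pa X' Y" "ts X \<phi>1 X'"
    then show ?thesis using k unfolding otr_def kst_def
      by (intro exI[of _ X'] exI[of _ Y] exI[of _ True] exI[of _ False]) auto
  next
    fix \<phi>1 Y' assume "\<phi> = pre (TPar DR) \<phi>1" "B = Pa X Y'" "ts Y \<phi>1 Y'"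
    then show ?thesis using k unfolding otr_def kst_def
      by (intro exI[of _ X] exI[of _ Y'] exI[of _ False] exI[of _ True]) auto
  next
    fix u1 l u2 k' X' Y' assume "\<phi> = PS [] u1 l u2 k'" "B = Pa X' Y'" "ts X (PA u1 (Vis l) k') X'"
       "ts Y (PA u2 (Vis (cobar l)) k') Y'"
    then show ?thesis using k unfolding otr_def kst_def
      by (intro exI[of _ X'] exI[of _ Y'] exI[of _ True] exI[of _ True]) force
  qed
qed

lemma kst_Pre: "kst (Pre a X) k B \<Longrightarrow> B = KPre a k X"
  unfolding kst_def using ts_Pre by blast
lemma kst_KPre: "kst (KPre a k X) k' B \<Longrightarrow> (\<exists>X'. B = KPre a k X' \<and> kst X k' X' \<and> k' \<noteq> k) \<or>
   (k' = k \<and> B = Pre a X)"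
  unfolding kst_def using ts_KPre by fastforce
lemma kst_Rs: "kst (Rs X l) k B \<Longrightarrow> \<exists>X'. B = Rs X' l \<and> kst X k X'"
  unfolding kst_def using ts_Rs by blast
lemma kst_Plus: "kst (Plus X Y) k B \<Longrightarrow>
   (\<exists>X'. B = Plus X' Y \<and> kst X k X' \<and> keys Y = {}) \<or>
   (\<exists>Y'. B = Plus X Y' \<and> kst Y k Y' \<and> keys X = {})"
  unfolding kst_def using ts_Plus by fastforce
lemma kst_neq: "kst A k B \<Longrightarrow> A \<noteq> B"
  unfolding kst_def using ts_neq by blast
lemma ts_kst: "ts A \<phi> B \<Longrightarrow> kst A (pkey \<phi>) B"
  unfolding kst_def by blast

lemma otr_T: "ts A \<phi> B \<Longrightarrow> otr True (pkey \<phi>) A B" unfolding otr_def kst_def by auto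
lemma otr_F: "otr False k A A" unfolding otr_def by auto
lemma otr_TD: "otr True k A B \<Longrightarrow> kst A k B" unfolding otr_def by auto

lemma sqPa: "kst (Pa X1 Y1) k2 S \<Longrightarrow> kst (Pa X2 Y2) k1 S \<Longrightarrow> otr a k1 X X1 \<Longrightarrow> otr b k1 Y Y1 \<Longrightarrow>
  otr c k2 X X2 \<Longrightarrow> otr d k2 Y Y2 \<Longrightarrow> k1 \<noteq> k2 \<Longrightarrow>
  \<exists>SL SR. S = Pa SL SR \<and> otr c k2 X1 SL \<and> otr a k1 X2 SL \<and> otr d k2 Y1 SR \<and> otr b k1 Y2 SR"
proof -
  assume q: "kst (Pa X1 Y1) k2 S" and r: "kst (Pa X2 Y2) k1 S" and a: "otr a k1 X X1" and b: "otr b k1 Y Y1"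
    and c: "otr c k2 X X2" and d: "otr d k2 Y Y2" and ne: "k1 \<noteq> k2"
  from kst_Pa[OF q] obtain SL SR f1 f2 where s: "S = Pa SL SR" "otr f1 k2 X1 SL" "otr f2 k2 Y1 SR" by blast
  from kst_Pa[OF r] s obtain g1 g2 where s2: "otr g1 k1 X2 SL" "otr g2 k1 Y2 SR" by auto
  have "a = g1 \<and> f1 = c" using comp_lemma[OF a s(2) c s2(1) ne] .
  moreover have "b = g2 \<and> f2 = d" using comp_lemma[OF b s(3) d s2(2) ne] .
  ultimately show ?thesis using s s2 by auto
qed

lemma L1: "ts P \<theta> Q \<Longrightarrow> ts P \<theta>' R \<Longrightarrow> pkey \<theta> \<noteq> pkey \<theta>' \<Longrightarrow> kst Q (pkey \<theta>') S \<Longrightarrow>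
   kst R (pkey \<theta>) S \<Longrightarrow> iota \<theta> \<theta>'"
proof (induction P arbitrary: \<theta> \<theta>' Q R S)
  case P0
  then show ?case using ts_P0 by blast
next
  case (Pre a X)
  have 1: "Q = KPre a (pkey \<theta>) X" "R = KPre a (pkey \<theta>') X"
    using ts_Pre[OF Pre(2)] ts_Pre[OF Pre(3)] by auto
  have "\<exists>S1. S = KPre a (pkey \<theta>) S1" using kst_KPre[of a "pkey \<theta>" X "pkey \<theta>'" S] Pre(5) Pre(4) 1 by auto
  moreover have "\<exists>S1. S = KPre a (pkey \<theta>') S1" using kst_KPre[of a "pkey \<theta>'" X "pkey \<theta>" S] Pre(6) Pre(4) 1 by auto
  ultimately show ?case using Pre(4) by auto
next
  case (Rs X l)
  from ts_Rs[OF Rs(2)] obtain X1 where 1: "Q = Rs X1 l" "ts X \<theta> X1" by blast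
  from ts_Rs[OF Rs(3)] obtain X2 where 2: "R = Rs X2 l" "ts X \<theta>' X2" by blast
  from kst_Rs[of X1 l "pkey \<theta>'" S] Rs(5) 1 obtain S1 where 3: "S = Rs S1 l" "kst X1 (pkey \<theta>') S1" by auto
  from kst_Rs[of X2 l "pkey \<theta>" S] Rs(6) 2 3 have 4: "kst X2 (pkey \<theta>) S1" by auto
  show ?case using Rs(1)[OF 1(2) 2(2) Rs(4) 3(2) 4] .
next
  case (KPre a k X)
  show ?case
    using ts_KPre[OF KPre(2)]
  proof (elim disjE exE conjE)
    fix X1 assume 1: "Q = KPre a k X1" "ts X \<theta> X1" "pkey \<theta> \<noteq> k"
    show ?thesis using ts_KPre[OF KPre(3)]
    proof (elim disjE exE conjE)
      fix X2 assume 2: "R = KPre a k X2" "ts X \<theta>' X2" "pkey \<theta>' \<noteq> k"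
      from kst_KPre[of a k X1 "pkey \<theta>'" S] KPre(5) 1 2 obtain S1 where
        3: "S = KPre a k S1" "kst X1 (pkey \<theta>') S1" by auto
      from kst_KPre[of a k X2 "pkey \<theta>" S] KPre(6) 1 2 3 have 4: "kst X2 (pkey \<theta>) S1" by auto
      show ?thesis using KPre(1)[OF 1(2) 2(2) KPre(4) 3(2) 4] .
    next
      assume 2: "\<theta>' = PA [] a k" "R = Pre a X"
      from kst_Pre[of a X "pkey \<theta>" S] KPre(6) 2 have "S = KPre a (pkey \<theta>) X" by simp
      then show ?thesis using kst_KPre[of a k X1 "pkey \<theta>'" S] KPre(5) 1 2 by auto
    qed
  next
    assume 1: "\<theta> = PA [] a k" "Q = Pre a X"
    show ?thesis using ts_KPre[OF KPre(3)]
    proof (elim disjE exE conjE)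
      fix X2 assume 2: "R = KPre a k X2" "ts X \<theta>' X2" "pkey \<theta>' \<noteq> k"
      from kst_Pre[of a X "pkey \<theta>'" S] KPre(5) 1 have "S = KPre a (pkey \<theta>') X" by simp
      then show ?thesis using kst_KPre[of a k X2 "pkey \<theta>" S] KPre(6) 1 2 by auto
    next
      assume 2: "\<theta>' = PA [] a k" "R = Pre a X"
      then show ?thesis using 1 KPre(4) by simp
    qed
  qed
next
  case (Plus X Y)
  show ?case
    using ts_Plus[OF Plus(3)]
  proof (elim disjE exE conjE)
    fix \<phi>1 X1 assume 1: "\<theta> = pre (TSum DL) \<phi>1" "Q = Plus X1 Y" "ts X \<phi>1 X1" "keys Y = {}"
    show ?thesis using ts_Plus[OF Plus(4)]
    proof (elim disjE exE conjE)
      fix \<phi>2 X2 assume 2: "\<theta>' = pre (TSum DL) \<phi>2" "R = Plus X2 Y" "ts X \<phi>2 X2" "keys Y = {}"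
      have k: "pkey \<phi>1 \<noteq> pkey \<phi>2" using Plus(5) 1 2 by simp
      have "kst (Plus X1 Y) (pkey \<theta>') S" using Plus(6) 1 2 by simp
        from kst_Plus[OF this] show ?thesis using 1 2
      proof (elim disjE exE conjE)
        fix S1 assume 3: "S = Plus S1 Y" "kst X1 (pkey \<theta>') S1"
        have "kst (Plus X2 Y) (pkey \<theta>) S" using Plus(7) 1 2 3 by simp
        from kst_Plus[OF this] show ?thesis using 1 2 3
        proof (elim disjE exE conjE)
          fix S2 assume 4: "S = Plus S2 Y" "kst X2 (pkey \<theta>) S2"
          have "iota \<phi>1 \<phi>2" using Plus(1)[OF 1(3) 2(3) k] 3 4 1 2 by auto
          then show ?thesis using 1 2 by (simp add: iota.C1)
        next
          fix S2 assume 4: "S = Plus X2 S2" "kst Y (pkey \<theta>) S2"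
          then show ?thesis using 3 kst_neq by auto
        qed
      next
        fix S1 assume 3: "S = Plus X1 S1" "kst Y (pkey \<theta>') S1"
        have "kst (Plus X2 Y) (pkey \<theta>) S" using Plus(7) 1 2 3 by simp
        from kst_Plus[OF this] show ?thesis using 1 2 3
        proof (elim disjE exE conjE)
          fix S2 assume 4: "S = Plus S2 Y" "kst X2 (pkey \<theta>) S2"
          then show ?thesis using 3 kst_neq by auto
        next
          fix S2 assume 4: "S = Plus X2 S2" "kst Y (pkey \<theta>) S2"
          then have "X1 = X2" using 3 by simp
          then show ?thesis using ts_keys[OF 1(3), of "pkey \<phi>1"] ts_keys[OF 2(3), of "pkey \<phi>1"] k by auto
        qed
      qed
    next
      fix \<phi>2 Y2 assume 2: "\<theta>' = pre (TSum DR) \<phi>2" "R = Plus X Y2" "ts Y \<phi>2 Y2" "keys X = {}"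
      have k1: "keys X1 = {pkey \<phi>1}" using ts_keys[OF 1(3)] 2(4) by auto
      have k2: "pkey \<phi>2 \<in> keys Y2" using ts_keys[OF 2(3), of "pkey \<phi>2"] 1(4) by auto
      have "kst (Plus X1 Y) (pkey \<theta>') S" using Plus(6) 1 2 k1 by simp
        from kst_Plus[OF this] show ?thesis using 1 2 k1
      proof (elim disjE exE conjE)
        fix S1 assume 3: "S = Plus S1 Y" "kst X1 (pkey \<theta>') S1"
        have "kst (Plus X Y2) (pkey \<theta>) S" using Plus(7) 1 2 3 k2 by simp
        from kst_Plus[OF this] show ?thesis using 1 2 3 k2
        proof (elim disjE exE conjE)
          fix S2 assume 4: "S = Plus X S2" "kst Y2 (pkey \<theta>) S2"
          have "kst X1 (pkey \<phi>2) X" using 3 4 2 by simp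
          then show ?thesis using kst_keys[of X1 "pkey \<phi>2" X "pkey \<phi>2"] k1 2(4) Plus(5) 1 2 by auto
        qed auto
      qed auto
    qed
  next
    fix \<phi>1 Y1 assume 1: "\<theta> = pre (TSum DR) \<phi>1" "Q = Plus X Y1" "ts Y \<phi>1 Y1" "keys X = {}"
    show ?thesis using ts_Plus[OF Plus(4)]
    proof (elim disjE exE conjE)
      fix \<phi>2 Y2 assume 2: "\<theta>' = pre (TSum DR) \<phi>2" "R = Plus X Y2" "ts Y \<phi>2 Y2" "keys X = {}"
      have k: "pkey \<phi>1 \<noteq> pkey \<phi>2" using Plus(5) 1 2 by simp
      have "kst (Plus X Y1) (pkey \<theta>') S" using Plus(6) 1 2 by simp
        from kst_Plus[OF this] show ?thesis using 1 2
      proof (elim disjE exE conjE)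
        fix S1 assume 3: "S = Plus X S1" "kst Y1 (pkey \<theta>') S1"
        have "kst (Plus X Y2) (pkey \<theta>) S" using Plus(7) 1 2 3 by simp
        from kst_Plus[OF this] show ?thesis using 1 2 3
        proof (elim disjE exE conjE)
          fix S2 assume 4: "S = Plus X S2" "kst Y2 (pkey \<theta>) S2"
          have "iota \<phi>1 \<phi>2" using Plus(2)[OF 1(3) 2(3) k] 3 4 1 2 by auto
          then show ?thesis using 1 2 by (simp add: iota.C1)
        next
          fix S2 assume 4: "S = Plus S2 Y2" "kst X (pkey \<theta>) S2"
          then show ?thesis using 3 kst_neq by auto
        qed
      next
        fix S1 assume 3: "S = Plus S1 Y1" "kst X (pkey \<theta>') S1"
        have "kst (Plus X Y2) (pkey \<theta>) S" using Plus(7) 1 2 3 by simp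
        from kst_Plus[OF this] show ?thesis using 1 2 3
        proof (elim disjE exE conjE)
          fix S2 assume 4: "S = Plus X S2" "kst Y2 (pkey \<theta>) S2"
          then show ?thesis using 3 kst_neq by auto
        next
          fix S2 assume 4: "S = Plus S2 Y2" "kst X (pkey \<theta>) S2"
          then have "Y1 = Y2" using 3 by simp
          then show ?thesis using ts_keys[OF 1(3), of "pkey \<phi>1"] ts_keys[OF 2(3), of "pkey \<phi>1"] k by auto
        qed
      qed
    next
      fix \<phi>2 X2 assume 2: "\<theta>' = pre (TSum DL) \<phi>2" "R = Plus X2 Y" "ts X \<phi>2 X2" "keys Y = {}"
      have k1: "keys Y1 = {pkey \<phi>1}" using ts_keys[OF 1(3)] 2(4) by auto
      have k2: "pkey \<phi>2 \<in> keys X2" using ts_keys[OF 2(3), of "pkey \<phi>2"] 1(4) by auto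
      have "kst (Plus X Y1) (pkey \<theta>') S" using Plus(6) 1 2 k1 by simp
        from kst_Plus[OF this] show ?thesis using 1 2 k1
      proof (elim disjE exE conjE)
        fix S1 assume 3: "S = Plus X S1" "kst Y1 (pkey \<theta>') S1"
        have "kst (Plus X2 Y) (pkey \<theta>) S" using Plus(7) 1 2 3 k2 by simp
        from kst_Plus[OF this] show ?thesis using 1 2 3 k2
        proof (elim disjE exE conjE)
          fix S2 assume 4: "S = Plus S2 Y" "kst X2 (pkey \<theta>) S2"
          have "kst Y1 (pkey \<phi>2) Y" using 3 4 2 by simp
          then show ?thesis using kst_keys[of Y1 "pkey \<phi>2" Y "pkey \<phi>2"] k1 2(4) Plus(5) 1 2 by auto
        qed auto
      qed auto
    qed
  qed
next
  case (Pa X Y)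
  have kk: "pkey \<theta> \<noteq> pkey \<theta>'" by fact
  show ?case using ts_Pa[OF Pa(3)]
  proof (elim disjE exE conjE)
    fix \<phi>1 X1 assume 1: "\<theta> = pre (TPar DL) \<phi>1" "Q = Pa X1 Y" "ts X \<phi>1 X1"
    have o1: "otr True (pkey \<theta>) X X1" "otr False (pkey \<theta>) Y Y" using otr_T[OF 1(3)] otr_F 1 by auto
    have q: "kst (Pa X1 Y) (pkey \<theta>') S" using Pa(6) 1 by simp
    show ?thesis using ts_Pa[OF Pa(4)]
    proof (elim disjE exE conjE)
      fix \<phi>2 X2 assume 2: "\<theta>' = pre (TPar DL) \<phi>2" "R = Pa X2 Y" "ts X \<phi>2 X2"
      have o2: "otr True (pkey \<theta>') X X2" "otr False (pkey \<theta>') Y Y" using otr_T[OF 2(3)] otr_F 2 by auto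
      have r: "kst (Pa X2 Y) (pkey \<theta>) S" using Pa(7) 2 by simp
      from sqPa[OF q r o1 o2 kk] obtain SL where "kst X1 (pkey \<theta>') SL" "kst X2 (pkey \<theta>) SL"
        using otr_TD by blast
      then have "iota \<phi>1 \<phi>2" using Pa(1)[OF 1(3) 2(3)] kk 1 2 by simp
      then show ?thesis using 1 2 by (simp add: iota.P1)
    next
      fix \<phi>2 Y2 assume 2: "\<theta>' = pre (TPar DR) \<phi>2" "R = Pa X Y2" "ts Y \<phi>2 Y2"
      show ?thesis using iota.P2[of \<phi>1 \<phi>2 DL] 1 2 kk by simp
    next
      fix u1 l u2 k X2 Y2 assume 2: "\<theta>' = PS [] u1 l u2 k" "R = Pa X2 Y2" "ts X (PA u1 (Vis l) k) X2"
        "ts Y (PA u2 (Vis (cobar l)) k) Y2"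
      have o2: "otr True (pkey \<theta>') X X2" "otr True (pkey \<theta>') Y Y2" using otr_T[OF 2(3)] otr_T[OF 2(4)] 2 by auto
      have r: "kst (Pa X2 Y2) (pkey \<theta>) S" using Pa(7) 2 by simp
      from sqPa[OF q r o1 o2 kk] obtain SL where "kst X1 (pkey \<theta>') SL" "kst X2 (pkey \<theta>) SL"
        using otr_TD by blast
      then have "iota \<phi>1 (PA u1 (Vis l) k)" using Pa(1)[OF 1(3) 2(3)] kk 1 2 by simp
      then show ?thesis using 1 2 iota.S1[of \<phi>1 DL u1 l u2 k] by simp
    qed
  next
    fix \<phi>1 Y1 assume 1: "\<theta> = pre (TPar DR) \<phi>1" "Q = Pa X Y1" "ts Y \<phi>1 Y1"
    have o1: "otr False (pkey \<theta>) X X" "otr True (pkey \<theta>) Y Y1" using otr_T[OF 1(3)] otr_F 1 by auto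
    have q: "kst (Pa X Y1) (pkey \<theta>') S" using Pa(6) 1 by simp
    show ?thesis using ts_Pa[OF Pa(4)]
    proof (elim disjE exE conjE)
      fix \<phi>2 X2 assume 2: "\<theta>' = pre (TPar DL) \<phi>2" "R = Pa X2 Y" "ts X \<phi>2 X2"
      show ?thesis using iota.P2[of \<phi>1 \<phi>2 DR] 1 2 kk by simp
    next
      fix \<phi>2 Y2 assume 2: "\<theta>' = pre (TPar DR) \<phi>2" "R = Pa X Y2" "ts Y \<phi>2 Y2"
      have o2: "otr False (pkey \<theta>') X X" "otr True (pkey \<theta>') Y Y2" using otr_T[OF 2(3)] otr_F 2 by auto
      have r: "kst (Pa X Y2) (pkey \<theta>) S" using Pa(7) 2 by simp
      from sqPa[OF q r o1 o2 kk] obtain SR where "kst Y1 (pkey \<theta>') SR" "kst Y2 (pkey \<theta>) SR"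
        using otr_TD by blast
      then have "iota \<phi>1 \<phi>2" using Pa(2)[OF 1(3) 2(3)] kk 1 2 by simp
      then show ?thesis using 1 2 by (simp add: iota.P1)
    next
      fix u1 l u2 k X2 Y2 assume 2: "\<theta>' = PS [] u1 l u2 k" "R = Pa X2 Y2" "ts X (PA u1 (Vis l) k) X2"
        "ts Y (PA u2 (Vis (cobar l)) k) Y2"
      have o2: "otr True (pkey \<theta>') X X2" "otr True (pkey \<theta>') Y Y2" using otr_T[OF 2(3)] otr_T[OF 2(4)] 2 by auto
      have r: "kst (Pa X2 Y2) (pkey \<theta>) S" using Pa(7) 2 by simp
      from sqPa[OF q r o1 o2 kk] obtain SR where "kst Y1 (pkey \<theta>') SR" "kst Y2 (pkey \<theta>) SR"
        using otr_TD by blast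
      then have "iota \<phi>1 (PA u2 (Vis (cobar l)) k)" using Pa(2)[OF 1(3) 2(4)] kk 1 2 by simp
      then show ?thesis using 1 2 iota.S1[of \<phi>1 DR u1 l u2 k] by simp
    qed
  next
    fix u1 l u2 k X1 Y1 assume 1: "\<theta> = PS [] u1 l u2 k" "Q = Pa X1 Y1" "ts X (PA u1 (Vis l) k) X1"
        "ts Y (PA u2 (Vis (cobar l)) k) Y1"
    have o1: "otr True (pkey \<theta>) X X1" "otr True (pkey \<theta>) Y Y1" using otr_T[OF 1(3)] otr_T[OF 1(4)] 1 by auto
    have q: "kst (Pa X1 Y1) (pkey \<theta>') S" using Pa(6) 1 by simp
    show ?thesis using ts_Pa[OF Pa(4)]
    proof (elim disjE exE conjE)
      fix \<phi>2 X2 assume 2: "\<theta>' = pre (TPar DL) \<phi>2" "R = Pa X2 Y" "ts X \<phi>2 X2"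
      have o2: "otr True (pkey \<theta>') X X2" "otr False (pkey \<theta>') Y Y" using otr_T[OF 2(3)] otr_F 2 by auto
      have r: "kst (Pa X2 Y) (pkey \<theta>) S" using Pa(7) 2 by simp
      from sqPa[OF q r o1 o2 kk] obtain SL where "kst X1 (pkey \<theta>') SL" "kst X2 (pkey \<theta>) SL"
        using otr_TD by blast
      then have "iota (PA u1 (Vis l) k) \<phi>2" using Pa(1)[OF 1(3) 2(3)] kk 1 2 by simp
      then show ?thesis using 1 2 iota.S2[of DL u1 l u2 k \<phi>2] by simp
    next
      fix \<phi>2 Y2 assume 2: "\<theta>' = pre (TPar DR) \<phi>2" "R = Pa X Y2" "ts Y \<phi>2 Y2"
      have o2: "otr False (pkey \<theta>') X X" "otr True (pkey \<theta>') Y Y2" using otr_T[OF 2(3)] otr_F 2 by auto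
      have r: "kst (Pa X Y2) (pkey \<theta>) S" using Pa(7) 2 by simp
      from sqPa[OF q r o1 o2 kk] obtain SR where "kst Y1 (pkey \<theta>') SR" "kst Y2 (pkey \<theta>) SR"
        using otr_TD by blast
      then have "iota (PA u2 (Vis (cobar l)) k) \<phi>2" using Pa(2)[OF 1(4) 2(3)] kk 1 2 by simp
      then show ?thesis using 1 2 iota.S2[of DR u1 l u2 k \<phi>2] by simp
    next
      fix u1' l' u2' k' X2 Y2 assume 2: "\<theta>' = PS [] u1' l' u2' k'" "R = Pa X2 Y2" "ts X (PA u1' (Vis l') k') X2"
        "ts Y (PA u2' (Vis (cobar l')) k') Y2"
      have o2: "otr True (pkey \<theta>') X X2" "otr True (pkey \<theta>') Y Y2" using otr_T[OF 2(3)] otr_T[OF 2(4)] 2 by auto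
      have r: "kst (Pa X2 Y2) (pkey \<theta>) S" using Pa(7) 2 by simp
      from sqPa[OF q r o1 o2 kk] obtain SL SR where "kst X1 (pkey \<theta>') SL" "kst X2 (pkey \<theta>) SL"
         "kst Y1 (pkey \<theta>') SR" "kst Y2 (pkey \<theta>) SR"
        using otr_TD by blast
      then have "iota (PA u1 (Vis l) k) (PA u1' (Vis l') k')" "iota (PA u2 (Vis (cobar l)) k) (PA u2' (Vis (cobar l')) k')"
        using Pa(1)[OF 1(3) 2(3)] Pa(2)[OF 1(4) 2(4)] kk 1 2 by simp_all
      then show ?thesis using 1 2 iota.S3 by simp
    qed
  qed
qed

lemma tr_ts: "tr d A \<phi> B \<Longrightarrow> ts A \<phi> B" unfolding ts_def by (cases d) auto
lemma tr_keys: "tr d A \<phi> B \<Longrightarrow> keys B \<subseteq> insert (pkey \<phi>) (keys A)"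
  by (cases d) (auto dest!: ftrans_keys)

lemma tr_P0: "\<not> tr d P0 \<phi> B" using ts_P0 tr_ts by blast
lemma tr_Pre: "tr d (Pre a X) \<phi> B \<Longrightarrow> \<exists>k. \<phi> = PA [] a k" using ts_Pre tr_ts by blast
lemma tr_KPre: "tr d (KPre a k X) \<phi> B \<Longrightarrow> (\<exists>X'. B = KPre a k X' \<and> tr d X \<phi> X' \<and> pkey \<phi> \<noteq> k) \<or> \<phi> = PA [] a k"
  by (cases d) (auto elim: ftrans.cases)
lemma tr_Rs: "tr d (Rs X l) \<phi> B \<Longrightarrow> \<exists>X'. B = Rs X' l \<and> tr d X \<phi> X' \<and> lab \<phi> \<notin> {Vis l, Vis (cobar l)}"
  by (cases d) (auto elim: ftrans.cases)
lemma tr_Plus: "tr d (Plus X Y) \<phi> B \<Longrightarrow>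
   (\<exists>\<phi>1 X'. \<phi> = pre (TSum DL) \<phi>1 \<and> B = Plus X' Y \<and> tr d X \<phi>1 X' \<and> keys Y = {}) \<or>
   (\<exists>\<phi>1 Y'. \<phi> = pre (TSum DR) \<phi>1 \<and> B = Plus X Y' \<and> tr d Y \<phi>1 Y' \<and> keys X = {})"
  by (cases d) (auto elim: ftrans.cases)
lemma tr_Pa: "tr d (Pa X Y) \<phi> B \<Longrightarrow>
   (\<exists>\<phi>1 X'. \<phi> = pre (TPar DL) \<phi>1 \<and> B = Pa X' Y \<and> tr d X \<phi>1 X' \<and> pkey \<phi>1 \<notin> keys Y) \<or>
   (\<exists>\<phi>1 Y'. \<phi> = pre (TPar DR) \<phi>1 \<and> B = Pa X Y' \<and> tr d Y \<phi>1 Y' \<and> pkey \<phi>1 \<notin> keys X) \<or>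
   (\<exists>u1 l u2 k X' Y'. \<phi> = PS [] u1 l u2 k \<and> B = Pa X' Y' \<and> tr d X (PA u1 (Vis l) k) X' \<and>
       tr d Y (PA u2 (Vis (cobar l)) k) Y')"
  by (cases d) (auto elim: ftrans.cases)

lemma tr_pref: "tr d X \<phi> X' \<Longrightarrow> pkey \<phi> \<noteq> k \<Longrightarrow> tr d (KPre a k X) \<phi> (KPre a k X')"
  by (cases d) (auto intro: ftrans.intros)
lemma tr_res: "tr d X \<phi> X' \<Longrightarrow> lab \<phi> \<notin> {Vis l, Vis (cobar l)} \<Longrightarrow> tr d (Rs X l) \<phi> (Rs X' l)"
  by (cases d) (auto intro: ftrans.intros)
lemma tr_sumL: "tr d X \<phi> X' \<Longrightarrow> keys Y = {} \<Longrightarrow> tr d (Plus X Y) (pre (TSum DL) \<phi>) (Plus X' Y)"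
  by (cases d) (auto intro: ftrans.intros)
lemma tr_sumR: "tr d X \<phi> X' \<Longrightarrow> keys Y = {} \<Longrightarrow> tr d (Plus Y X) (pre (TSum DR) \<phi>) (Plus Y X')"
  by (cases d) (auto intro: ftrans.intros)
lemma tr_parL: "tr d X \<phi> X' \<Longrightarrow> pkey \<phi> \<notin> keys Y \<Longrightarrow> tr d (Pa X Y) (pre (TPar DL) \<phi>) (Pa X' Y)"
  by (cases d) (auto intro: ftrans.intros)
lemma tr_parR: "tr d X \<phi> X' \<Longrightarrow> pkey \<phi> \<notin> keys Y \<Longrightarrow> tr d (Pa Y X) (pre (TPar DR) \<phi>) (Pa Y X')"
  by (cases d) (auto intro: ftrans.intros)
lemma tr_syn: "tr d X (PA u1 (Vis l) k) X' \<Longrightarrow> tr d Y (PA u2 (Vis (cobar l)) k) Y' \<Longrightarrow>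
   tr d (Pa X Y) (PS [] u1 l u2 k) (Pa X' Y')"
  by (cases d) (auto intro: ftrans.intros)

lemma tr_parL': "tr d X \<phi> X' \<Longrightarrow> keys Y \<subseteq> insert k K \<Longrightarrow> pkey \<phi> \<notin> K \<Longrightarrow> pkey \<phi> \<noteq> k \<Longrightarrow>
  \<theta> = pre (TPar DL) \<phi> \<Longrightarrow> tr d (Pa X Y) \<theta> (Pa X' Y)"
  using tr_parL by blast
lemma tr_parR': "tr d X \<phi> X' \<Longrightarrow> keys Y \<subseteq> insert k K \<Longrightarrow> pkey \<phi> \<notin> K \<Longrightarrow> pkey \<phi> \<noteq> k \<Longrightarrow>
  \<theta> = pre (TPar DR) \<phi> \<Longrightarrow> tr d (Pa Y X) \<theta> (Pa Y X')"
  using tr_parR by blast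

lemma L2: "tr d1 P \<theta> Q \<Longrightarrow> tr d2 P \<theta>' R \<Longrightarrow> iota \<theta> \<theta>' \<Longrightarrow> \<exists>S. tr d2 Q \<theta>' S \<and> tr d1 R \<theta> S"
proof (induction P arbitrary: \<theta> \<theta>' Q R)
  case P0
  then show ?case using tr_P0 by blast
next
  case (Pre a X)
  then show ?case using tr_Pre not_iota_PA by metis
next
  case (Rs X l)
  from tr_Rs[OF Rs(2)] obtain X1 where 1: "Q = Rs X1 l" "tr d1 X \<theta> X1" "lab \<theta> \<notin> {Vis l, Vis (cobar l)}" by blast
  from tr_Rs[OF Rs(3)] obtain X2 where 2: "R = Rs X2 l" "tr d2 X \<theta>' X2" "lab \<theta>' \<notin> {Vis l, Vis (cobar l)}" by blast
  from Rs(1)[OF 1(2) 2(2) Rs(4)] obtain S where "tr d2 X1 \<theta>' S" "tr d1 X2 \<theta> S" by blast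
  then show ?case using 1 2 tr_res by blast
next
  case (KPre a k X)
  from tr_KPre[OF KPre(2)] not_iota_PA KPre(4) obtain X1 where
    1: "Q = KPre a k X1" "tr d1 X \<theta> X1" "pkey \<theta> \<noteq> k" by blast
  from tr_KPre[OF KPre(3)] not_iota_PA KPre(4) obtain X2 where
    2: "R = KPre a k X2" "tr d2 X \<theta>' X2" "pkey \<theta>' \<noteq> k" by blast
  from KPre(1)[OF 1(2) 2(2) KPre(4)] obtain S where "tr d2 X1 \<theta>' S" "tr d1 X2 \<theta> S" by blast
  then show ?case using 1 2 tr_pref by blast
next
  case (Plus X Y)
  show ?case using tr_Plus[OF Plus(3)]
  proof (elim disjE exE conjE)
    fix \<phi>1 X1 assume 1: "\<theta> = pre (TSum DL) \<phi>1" "Q = Plus X1 Y" "tr d1 X \<phi>1 X1" "keys Y = {}"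
    show ?thesis using tr_Plus[OF Plus(4)]
    proof (elim disjE exE conjE)
      fix \<phi>2 X2 assume 2: "\<theta>' = pre (TSum DL) \<phi>2" "R = Plus X2 Y" "tr d2 X \<phi>2 X2" "keys Y = {}"
      have "iota \<phi>1 \<phi>2" using iota_sum_inv Plus(5) 1 2 by blast
      from Plus(1)[OF 1(3) 2(3) this] obtain S where "tr d2 X1 \<phi>2 S" "tr d1 X2 \<phi>1 S" by blast
      then show ?thesis using 1 2 tr_sumL by blast
    next
      fix \<phi>2 Y2 assume 2: "\<theta>' = pre (TSum DR) \<phi>2"
      then show ?thesis using iota_sum_inv Plus(5) 1 by fastforce
    qed
  next
    fix \<phi>1 Y1 assume 1: "\<theta> = pre (TSum DR) \<phi>1" "Q = Plus X Y1" "tr d1 Y \<phi>1 Y1" "keys X = {}"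
    show ?thesis using tr_Plus[OF Plus(4)]
    proof (elim disjE exE conjE)
      fix \<phi>2 X2 assume 2: "\<theta>' = pre (TSum DL) \<phi>2"
      then show ?thesis using iota_sum_inv Plus(5) 1 by fastforce
    next
      fix \<phi>2 Y2 assume 2: "\<theta>' = pre (TSum DR) \<phi>2" "R = Plus X Y2" "tr d2 Y \<phi>2 Y2" "keys X = {}"
      have "iota \<phi>1 \<phi>2" using iota_sum_inv Plus(5) 1 2 by blast
      from Plus(2)[OF 1(3) 2(3) this] obtain S where "tr d2 Y1 \<phi>2 S" "tr d1 Y2 \<phi>1 S" by blast
      then show ?thesis using 1 2 tr_sumR by blast
    qed
  qed
next
  case (Pa X Y)
  have kk: "pkey \<theta> \<noteq> pkey \<theta>'" using iota_key Pa(5) by blast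
  show ?case using tr_Pa[OF Pa(3)]
  proof (elim disjE exE conjE)
    fix \<phi>1 X1 assume 1: "\<theta> = pre (TPar DL) \<phi>1" "Q = Pa X1 Y" "tr d1 X \<phi>1 X1" "pkey \<phi>1 \<notin> keys Y"
    have kx1: "keys X1 \<subseteq> insert (pkey \<phi>1) (keys X)" using tr_keys[OF 1(3)] .
    show ?thesis using tr_Pa[OF Pa(4)]
    proof (elim disjE exE conjE)
      fix \<phi>2 X2 assume 2: "\<theta>' = pre (TPar DL) \<phi>2" "R = Pa X2 Y" "tr d2 X \<phi>2 X2" "pkey \<phi>2 \<notin> keys Y"
      have "iota \<phi>1 \<phi>2" using iota_par_inv Pa(5) 1 2 by fastforce
      from Pa(1)[OF 1(3) 2(3) this] obtain S where "tr d2 X1 \<phi>2 S" "tr d1 X2 \<phi>1 S" by blast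
      then show ?thesis using 1 2 tr_parL by blast
    next
      fix \<phi>2 Y2 assume 2: "\<theta>' = pre (TPar DR) \<phi>2" "R = Pa X Y2" "tr d2 Y \<phi>2 Y2" "pkey \<phi>2 \<notin> keys X"
      have ky2: "keys Y2 \<subseteq> insert (pkey \<phi>2) (keys Y)" using tr_keys[OF 2(3)] .
      have "tr d2 (Pa X1 Y) \<theta>' (Pa X1 Y2)" using 2 kk 1 by (intro tr_parR'[OF 2(3) kx1]) auto
      moreover have "tr d1 (Pa X Y2) \<theta> (Pa X1 Y2)" using 1 kk 2 by (intro tr_parL'[OF 1(3) ky2]) auto
      ultimately show ?thesis using 1 2 by blast
    next
      fix u1 l u2 k X2 Y2 assume 2: "\<theta>' = PS [] u1 l u2 k" "R = Pa X2 Y2" "tr d2 X (PA u1 (Vis l) k) X2"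
        "tr d2 Y (PA u2 (Vis (cobar l)) k) Y2"
      have ky2: "keys Y2 \<subseteq> insert k (keys Y)" using tr_keys[OF 2(4)] by simp
      have "iota \<phi>1 (PA u1 (Vis l) k)" using iota_S1_inv[of DL \<phi>1 u1 l u2 k] Pa(5) 1 2 by simp
      from Pa(1)[OF 1(3) 2(3) this] obtain S where s: "tr d2 X1 (PA u1 (Vis l) k) S" "tr d1 X2 \<phi>1 S" by blast
      have "tr d2 (Pa X1 Y) \<theta>' (Pa S Y2)" using tr_syn[OF s(1) 2(4)] 2 by simp
      moreover have "tr d1 (Pa X2 Y2) \<theta> (Pa S Y2)" using 1 kk 2 by (intro tr_parL'[OF s(2) ky2]) auto
      ultimately show ?thesis using 1 2 by blast
    qed
  next
    fix \<phi>1 Y1 assume 1: "\<theta> = pre (TPar DR) \<phi>1" "Q = Pa X Y1" "tr d1 Y \<phi>1 Y1" "pkey \<phi>1 \<notin> keys X"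
    have ky1: "keys Y1 \<subseteq> insert (pkey \<phi>1) (keys Y)" using tr_keys[OF 1(3)] .
    show ?thesis using tr_Pa[OF Pa(4)]
    proof (elim disjE exE conjE)
      fix \<phi>2 X2 assume 2: "\<theta>' = pre (TPar DL) \<phi>2" "R = Pa X2 Y" "tr d2 X \<phi>2 X2" "pkey \<phi>2 \<notin> keys Y"
      have kx2: "keys X2 \<subseteq> insert (pkey \<phi>2) (keys X)" using tr_keys[OF 2(3)] .
      have "tr d2 (Pa X Y1) \<theta>' (Pa X2 Y1)" using 2 kk 1 by (intro tr_parL'[OF 2(3) ky1]) auto
      moreover have "tr d1 (Pa X2 Y) \<theta> (Pa X2 Y1)" using 1 kk 2 by (intro tr_parR'[OF 1(3) kx2]) auto
      ultimately show ?thesis using 1 2 by blast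
    next
      fix \<phi>2 Y2 assume 2: "\<theta>' = pre (TPar DR) \<phi>2" "R = Pa X Y2" "tr d2 Y \<phi>2 Y2" "pkey \<phi>2 \<notin> keys X"
      have "iota \<phi>1 \<phi>2" using iota_par_inv Pa(5) 1 2 by fastforce
      from Pa(2)[OF 1(3) 2(3) this] obtain S where "tr d2 Y1 \<phi>2 S" "tr d1 Y2 \<phi>1 S" by blast
      then show ?thesis using 1 2 tr_parR by blast
    next
      fix u1 l u2 k X2 Y2 assume 2: "\<theta>' = PS [] u1 l u2 k" "R = Pa X2 Y2" "tr d2 X (PA u1 (Vis l) k) X2"
        "tr d2 Y (PA u2 (Vis (cobar l)) k) Y2"
      have kx2: "keys X2 \<subseteq> insert k (keys X)" using tr_keys[OF 2(3)] by simp
      have "iota \<phi>1 (PA u2 (Vis (cobar l)) k)" using iota_S1_inv[of DR \<phi>1 u1 l u2 k] Pa(5) 1 2 by simp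
      from Pa(2)[OF 1(3) 2(4) this] obtain S where s: "tr d2 Y1 (PA u2 (Vis (cobar l)) k) S" "tr d1 Y2 \<phi>1 S" by blast
      have "tr d2 (Pa X Y1) \<theta>' (Pa X2 S)" using tr_syn[OF 2(3) s(1)] 2 by simp
      moreover have "tr d1 (Pa X2 Y2) \<theta> (Pa X2 S)" using 1 kk 2 by (intro tr_parR'[OF s(2) kx2]) auto
      ultimately show ?thesis using 1 2 by blast
    qed
  next
    fix u1 l u2 k X1 Y1 assume 1: "\<theta> = PS [] u1 l u2 k" "Q = Pa X1 Y1" "tr d1 X (PA u1 (Vis l) k) X1"
        "tr d1 Y (PA u2 (Vis (cobar l)) k) Y1"
    have kx1: "keys X1 \<subseteq> insert k (keys X)" using tr_keys[OF 1(3)] by simp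
    have ky1: "keys Y1 \<subseteq> insert k (keys Y)" using tr_keys[OF 1(4)] by simp
    show ?thesis using tr_Pa[OF Pa(4)]
    proof (elim disjE exE conjE)
      fix \<phi>2 X2 assume 2: "\<theta>' = pre (TPar DL) \<phi>2" "R = Pa X2 Y" "tr d2 X \<phi>2 X2" "pkey \<phi>2 \<notin> keys Y"
      have "iota (PA u1 (Vis l) k) \<phi>2" using iota_S2_inv[of u1 l u2 k DL \<phi>2] Pa(5) 1 2 by simp
      from Pa(1)[OF 1(3) 2(3) this] obtain S where s: "tr d2 X1 \<phi>2 S" "tr d1 X2 (PA u1 (Vis l) k) S" by blast
      have "tr d2 (Pa X1 Y1) \<theta>' (Pa S Y1)" using 2 kk 1 by (intro tr_parL'[OF s(1) ky1]) auto
      moreover have "tr d1 (Pa X2 Y) \<theta> (Pa S Y1)" using tr_syn[OF s(2) 1(4)] 1 by simp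
      ultimately show ?thesis using 1 2 by blast
    next
      fix \<phi>2 Y2 assume 2: "\<theta>' = pre (TPar DR) \<phi>2" "R = Pa X Y2" "tr d2 Y \<phi>2 Y2" "pkey \<phi>2 \<notin> keys X"
      have "iota (PA u2 (Vis (cobar l)) k) \<phi>2" using iota_S2_inv[of u1 l u2 k DR \<phi>2] Pa(5) 1 2 by simp
      from Pa(2)[OF 1(4) 2(3) this] obtain S where s: "tr d2 Y1 \<phi>2 S" "tr d1 Y2 (PA u2 (Vis (cobar l)) k) S" by blast
      have "tr d2 (Pa X1 Y1) \<theta>' (Pa X1 S)" using 2 kk 1 by (intro tr_parR'[OF s(1) kx1]) auto
      moreover have "tr d1 (Pa X Y2) \<theta> (Pa X1 S)" using tr_syn[OF 1(3) s(2)] 1 by simp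
      ultimately show ?thesis using 1 2 by blast
    next
      fix u1' l' u2' k' X2 Y2 assume 2: "\<theta>' = PS [] u1' l' u2' k'" "R = Pa X2 Y2" "tr d2 X (PA u1' (Vis l') k') X2"
        "tr d2 Y (PA u2' (Vis (cobar l')) k') Y2"
      have i: "iota (PA u1 (Vis l) k) (PA u1' (Vis l') k')" "iota (PA u2 (Vis (cobar l)) k) (PA u2' (Vis (cobar l')) k')"
        using iota_S3_inv Pa(5) 1 2 by blast+
      from Pa(1)[OF 1(3) 2(3) i(1)] obtain SL where s: "tr d2 X1 (PA u1' (Vis l') k') SL" "tr d1 X2 (PA u1 (Vis l) k) SL" by blast
      from Pa(2)[OF 1(4) 2(4) i(2)] obtain SR where r: "tr d2 Y1 (PA u2' (Vis (cobar l')) k') SR" "tr d1 Y2 (PA u2 (Vis (cobar l)) k) SR" by blast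
      have "tr d2 (Pa X1 Y1) \<theta>' (Pa SL SR)" using tr_syn[OF s(1) r(1)] 2 by simp
      moreover have "tr d1 (Pa X2 Y2) \<theta> (Pa SL SR)" using tr_syn[OF s(2) r(2)] 1 by simp
      ultimately show ?thesis using 1 2 by blast
    qed
  qed
qed

lemma hat_tr: "hat t \<theta> \<longleftrightarrow> lab \<theta> = clab t \<and> pkey \<theta> = ckey t \<and> tr (dirn t) (src t) \<theta> (tgt t)"
  unfolding hat_def by (cases "dirn t") auto

lemma ts_step: "ts A \<phi> B \<Longrightarrow> step A B" unfolding ts_def step_def by blast

lemma reach_step: "reachable A \<Longrightarrow> step A B \<Longrightarrow> reachable B"
  unfolding reachable_def by (meson rtranclp.rtrancl_into_rtrancl)

theorem lemma6p11:
  fixes t u :: "'n ctrans"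
  assumes "is_ctrans t" and "is_ctrans u" and "coinitial t u"
  shows "direct_key_indep t u \<longleftrightarrow> ctrans_indep t u"
proof
  from assms(1) obtain \<theta> where ht: "hat t \<theta>" and rt: "reachable (src t)" unfolding is_ctrans_def by blast
  from assms(2) obtain \<theta>' where hu: "hat u \<theta>'" unfolding is_ctrans_def by blast
  have st: "src u = src t" using assms(3) unfolding coinitial_def by simp
  have tt: "ts (src t) \<theta> (tgt t)" using ht hat_tr tr_ts by blast
  have tu: "ts (src t) \<theta>' (tgt u)" using hu hat_tr tr_ts st by metis
  have conn: "connected t u" unfolding connected_def using ts_step[OF tu] by auto
  assume "direct_key_indep t u"
  then obtain S where ne: "ckey t \<noteq> ckey u" and
    c1: "is_ctrans (CT (tgt t) (dirn u) (clab u) (ckey u) S)" and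
    c2: "is_ctrans (CT (tgt u) (dirn t) (clab t) (ckey t) S)"
    unfolding direct_key_indep_def by blast
  from c1 obtain \<phi> where "hat (CT (tgt t) (dirn u) (clab u) (ckey u) S) \<phi>" unfolding is_ctrans_def by blast
  then have k1: "kst (tgt t) (pkey \<theta>') S" using hu unfolding hat_tr kst_def
    using tr_ts by (metis ctrans.sel hat_tr)
  from c2 obtain \<phi>' where "hat (CT (tgt u) (dirn t) (clab t) (ckey t) S) \<phi>'" unfolding is_ctrans_def by blast
  then have k2: "kst (tgt u) (pkey \<theta>) S" using ht unfolding hat_tr kst_def
    using tr_ts by (metis ctrans.sel hat_tr)
  have "pkey \<theta> \<noteq> pkey \<theta>'" using ne ht hu unfolding hat_def by simp
  from L1[OF tt tu this k1 k2] have "iota \<theta> \<theta>'" .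
  then show "ctrans_indep t u" unfolding ctrans_indep_def using conn ht hu by blast
next
  from assms(1) have rt: "reachable (src t)" unfolding is_ctrans_def by blast
  have st: "src u = src t" using assms(3) unfolding coinitial_def by simp
  assume "ctrans_indep t u"
  then obtain \<theta> \<theta>' where ht: "hat t \<theta>" and hu: "hat u \<theta>'" and i: "iota \<theta> \<theta>'"
    unfolding ctrans_indep_def by blast
  have tt: "tr (dirn t) (src t) \<theta> (tgt t)" using ht hat_tr by blast
  have tu: "tr (dirn u) (src t) \<theta>' (tgt u)" using hu hat_tr st by metis
  from L2[OF tt tu i] obtain S where s1: "tr (dirn u) (tgt t) \<theta>' S" and s2: "tr (dirn t) (tgt u) \<theta> S" by blast
  have r1: "reachable (tgt t)" using reach_step[OF rt ts_step[OF tr_ts[OF tt]]] .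
  have r2: "reachable (tgt u)" using reach_step[OF rt ts_step[OF tr_ts[OF tu]]] .
  have "ckey t \<noteq> ckey u" using iota_key[OF i] ht hu unfolding hat_def by simp
  moreover have "is_ctrans (CT (tgt t) (dirn u) (clab u) (ckey u) S)"
    unfolding is_ctrans_def using r1 s1 hu unfolding hat_tr by auto
  moreover have "is_ctrans (CT (tgt u) (dirn t) (clab t) (ckey t) S)"
    unfolding is_ctrans_def using r2 s2 ht unfolding hat_tr by auto
  ultimately show "direct_key_indep t u" unfolding direct_key_indep_def by blast
qed

end
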